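(* Let $a>0$, $p>1$, and let $\phi\in C^1((0,a])\cap C^0([0,a])$ satisfy $\phi(0)=0$, $\phi(t)>0$ for $t\in(0,a]$, and $c_1t^{p-1+\delta}\le\phi(t)\le c_2t^{p-1+\delta}$ for all $t\in(0,a]$, for some constants $c_1,c_2,\delta>0$. Then $C^1_0[0,a]$ is dense in $\mathcal E$ with respect to the norm $\|u\|=\left(\int_0^a|u'|^p\phi\,dt\right)^{1/p}$.
   Context: $W^{1,p}(0,a;\phi)=\{u:[0,a]\to\mathbb R:\ u\in L^1_{\mathrm{loc}}[0,a],\ \int_0^a|u'|^p\phi\,dt<\infty\}$, where $u'$ is the distributional derivative (such $u$ are absolutely continuous on $[\epsilon,a]$ for every $\epsilon\in(0,a)$). $\mathcal E=\{u\in W^{1,p}(0,a;\phi): u(a)=0\}$, normed by $\|u\|=(\int_0^a|u'|^p\phi\,dt)^{1/p}$. $C^1_0[0,a]$ denotes the $C^1$ functions on $[0,a]$ vanishing at $0$ and at $a$. *)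

theory Defs
  imports "HOL-Analysis.Analysis"
begin

definition smooth_fun :: "(real \<Rightarrow> real) \<Rightarrow> bool" where
  "smooth_fun \<psi> \<longleftrightarrow> (\<forall>k x. ((deriv ^^ k) \<psi>) differentiable (at x))"

definition test_fun :: "real \<Rightarrow> (real \<Rightarrow> real) \<Rightarrow> bool" where
  "test_fun a \<psi> \<longleftrightarrow> smooth_fun \<psi> \<and>
     (\<exists>c d. 0 < c \<and> c \<le> d \<and> d < a \<and> (\<forall>t. t \<notin> {c..d} \<longrightarrow> \<psi> t = 0))"

definition loc_int :: "real \<Rightarrow> (real \<Rightarrow> real) \<Rightarrow> bool" where
  "loc_int a u \<longleftrightarrow> (\<forall>c d. 0 < c \<and> d < a \<longrightarrow> set_integrable lborel {c..d} u)"

definition distr_deriv :: "real \<Rightarrow> (real \<Rightarrow> real) \<Rightarrow> (real \<Rightarrow> real) \<Rightarrow> bool" where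
  "distr_deriv a u g \<longleftrightarrow> loc_int a u \<and> loc_int a g \<and>
     (\<forall>\<psi>. test_fun a \<psi> \<longrightarrow>
        (LINT t:{0<..<a}|lborel. u t * deriv \<psi> t) = - (LINT t:{0<..<a}|lborel. g t * \<psi> t))"

definition W1p :: "real \<Rightarrow> real \<Rightarrow> (real \<Rightarrow> real) \<Rightarrow> (real \<Rightarrow> real) \<Rightarrow> (real \<Rightarrow> real) \<Rightarrow> bool" where
  "W1p a p \<phi> u g \<longleftrightarrow> distr_deriv a u g \<and> set_borel_measurable lborel {0<..<a} g \<and>
     set_integrable lborel {0..a} (\<lambda>t. \<bar>g t\<bar> powr p * \<phi> t)"

text \<open>u \<in> E (using the continuous representative on (0,a]) with derivative g.\<close>
definition E_space :: "real \<Rightarrow> real \<Rightarrow> (real \<Rightarrow> real) \<Rightarrow> (real \<Rightarrow> real) \<Rightarrow> (real \<Rightarrow> real) \<Rightarrow> bool" where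
  "E_space a p \<phi> u g \<longleftrightarrow> W1p a p \<phi> u g \<and> continuous_on {0<..a} u \<and> u a = 0"

definition C1_0 :: "real \<Rightarrow> (real \<Rightarrow> real) \<Rightarrow> (real \<Rightarrow> real) \<Rightarrow> bool" where
  "C1_0 a v v' \<longleftrightarrow> continuous_on {0..a} v' \<and>
     (\<forall>t\<in>{0..a}. (v has_real_derivative v' t) (at t within {0..a})) \<and> v 0 = 0 \<and> v a = 0"

end

theory Submission
  imports Defs
begin

lemma int_bdd:
  fixes f :: "real \<Rightarrow> real"
  assumes "f \<in> borel_measurable (restrict_space lborel {l..u})" "\<And>x. x \<in> {l..u} \<Longrightarrow> \<bar>f x\<bar> \<le> B"
  shows "integrable (restrict_space lborel {l..u}) f"
proof (rule Bochner_Integration.integrable_bound[where f="\<lambda>x. B"])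
  have "integrable lborel (\<lambda>x. indicator {l..u} x * B)"
    by (intro integrable_mult_left integrable_real_indicator) (auto simp: emeasure_lborel_Icc_eq)
  then show "integrable (restrict_space lborel {l..u}) (\<lambda>x. B)"
    by (simp add: integrable_restrict_space)
  show "f \<in> borel_measurable (restrict_space lborel {l..u})" by fact
  show "AE x in restrict_space lborel {l..u}. norm (f x) \<le> norm B"
    using assms(2) by (intro AE_I2) (auto simp: space_restrict_space intro: order_trans[OF _ abs_ge_self])
qed

lemma dens_ind:
  fixes l u e :: real
  assumes A: "A \<in> sets borel" "A \<subseteq> {l..u}" and e: "e > 0"
  shows "\<exists>v. continuous_on UNIV v \<and> (\<forall>x. 0 \<le> v x \<and> v x \<le> 1) \<and>
     integral\<^sup>L (restrict_space lborel {l..u}) (\<lambda>x. \<bar>indicator A x - v x\<bar>) < e"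
proof -
  let ?M = "restrict_space lborel {l..u}"
  obtain U where U: "open U" "A \<subseteq> U" "emeasure lborel (U - A) < e/2"
    using outer_regular_lborel[OF A(1), of "e/2"] e by auto
  define U' where "U' = U \<inter> {l-1<..<u+1}"
  have oU': "open U'" using U by (simp add: U'_def open_Int)
  have AU': "A \<subseteq> U'" using U A by (auto simp: U'_def)
  have ne: "- U' \<noteq> {}" unfolding U'_def by (auto intro!: exI[of _ "u+2"])
  have cl: "closed (- U')" using oU' by (simp add: closed_Compl)
  define f where "f n x = min 1 (real n * infdist x (- U'))" for n x
  have fc: "continuous_on UNIV (f n)" for n
    unfolding f_def by (intro continuous_intros)
  have fb: "0 \<le> f n x \<and> f n x \<le> 1" for n x
    unfolding f_def by (auto simp: infdist_nonneg)
  have lim: "(\<lambda>n. f n x) \<longlonglongrightarrow> indicator U' x" for x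
  proof (cases "x \<in> U'")
    case True
    then have d: "infdist x (- U') > 0"
      using in_closed_iff_infdist_zero[OF cl ne, of x] infdist_nonneg[of x "-U'"] by auto
    obtain N :: nat where N: "N > 1 / infdist x (- U')" using reals_Archimedean2 by blast
    have "eventually (\<lambda>n. f n x = 1) sequentially"
      unfolding eventually_sequentially
    proof (intro exI allI impI)
      fix n assume "N \<le> n"
      then have "real n * infdist x (- U') \<ge> 1"
        using N d by (smt (verit, best) divide_less_eq mult_right_mono of_nat_le_iff)
      then show "f n x = 1" unfolding f_def by simp
    qed
    then show ?thesis using True by (simp add: tendsto_eventually)
  next
    case False
    then have "infdist x (- U') = 0" by simp
    then show ?thesis using False by (simp add: f_def)
  qed
  have "(\<lambda>n. integral\<^sup>L ?M (\<lambda>x. \<bar>indicator U' x - f n x\<bar>)) \<longlonglongrightarrow> integral\<^sup>L ?M (\<lambda>x. 0::real)"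
  proof (rule integral_dominated_convergence[where w="\<lambda>x. 1"])
    show "(\<lambda>x. 0::real) \<in> borel_measurable ?M" by simp
    show "(\<lambda>x. \<bar>indicator U' x - f n x\<bar>) \<in> borel_measurable ?M" for n
      using borel_measurable_continuous_onI[OF fc[of n]] oU' by (intro measurable_restrict_space1) auto
    show "integrable ?M (\<lambda>x. 1::real)"
      by (auto simp: integrable_restrict_space emeasure_lborel_Icc_eq intro!: integrable_real_indicator)
    show "AE x in ?M. (\<lambda>n. \<bar>indicator U' x - f n x\<bar>) \<longlonglongrightarrow> 0"
    proof (intro AE_I2)
      fix x
      have "(\<lambda>n. \<bar>indicator U' x - f n x\<bar>) \<longlonglongrightarrow> \<bar>indicator U' x - indicator U' x\<bar>"
        by (intro tendsto_intros lim)
      then show "(\<lambda>n. \<bar>indicator U' x - f n x\<bar>) \<longlonglongrightarrow> (0::real)" by simp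
    qed
    show "AE x in ?M. norm (\<bar>indicator U' x - f n x\<bar>) \<le> 1" for n
      using fb[of n] by (intro AE_I2) (auto simp: indicator_def)
  qed
  then have "(\<lambda>n. integral\<^sup>L ?M (\<lambda>x. \<bar>indicator U' x - f n x\<bar>)) \<longlonglongrightarrow> 0" by simp
  then have "eventually (\<lambda>n. integral\<^sup>L ?M (\<lambda>x. \<bar>indicator U' x - f n x\<bar>) < e/2) sequentially"
    using e by (intro order_tendstoD(2)) auto
  then obtain n where n: "integral\<^sup>L ?M (\<lambda>x. \<bar>indicator U' x - f n x\<bar>) < e/2"
    by (auto simp: eventually_sequentially)
  have m1: "measure lborel (U - A) < e/2"
  proof -
    have "emeasure lborel (U - A) \<noteq> top" using U(3) by auto
    then show ?thesis using U(3) by (simp add: emeasure_eq_ennreal_measure ennreal_less_iff)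
  qed
  have UAs: "U - A \<in> sets lborel" using U(1) A(1) by auto
  have UAf: "emeasure lborel (U - A) < top" using U(3) ennreal_less_top[of "e/2"] by (rule order.strict_trans)
  have Xs: "(U' - A) \<inter> {l..u} \<in> sets lborel" using oU' A(1) by auto
  have Xsub: "(U' - A) \<inter> {l..u} \<subseteq> U - A" by (auto simp: U'_def)
  have Xm: "measure lborel ((U' - A) \<inter> {l..u}) \<le> measure lborel (U - A)"
    using Xs UAs Xsub UAf by (intro measure_mono_fmeasurable) (auto simp: fmeasurable_def)
  have fm: "f n \<in> borel_measurable borel" using fc by (rule borel_measurable_continuous_onI)
  have int1: "integrable ?M (\<lambda>x. \<bar>indicator U' x - f n x\<bar>)"
    apply (rule int_bdd[where B=1])
    using fm oU' apply (intro measurable_restrict_space1) apply auto[1]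
    using fb[of n] by (auto simp: indicator_def)
  have int2: "integrable ?M (\<lambda>x. indicator ((U' - A) \<inter> {l..u}) x :: real)"
    apply (rule int_bdd[where B=1])
    using Xs apply (intro measurable_restrict_space1) apply auto[1]
    by (auto simp: indicator_def)
  have int3: "integrable ?M (\<lambda>x. \<bar>indicator A x - f n x\<bar>)"
    apply (rule int_bdd[where B=1])
    using fm A(1) apply (intro measurable_restrict_space1) apply auto[1]
    using fb[of n] by (auto simp: indicator_def)
  have "integral\<^sup>L ?M (\<lambda>x. \<bar>indicator A x - f n x\<bar>) \<le>
      integral\<^sup>L ?M (\<lambda>x. indicator ((U' - A) \<inter> {l..u}) x + \<bar>indicator U' x - f n x\<bar>)"
  proof (rule integral_mono[OF int3 Bochner_Integration.integrable_add[OF int2 int1]])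
    fix x assume "x \<in> space ?M"
    then have "x \<in> {l..u}" by simp
    then show "\<bar>indicator A x - f n x\<bar> \<le> indicator ((U' - A) \<inter> {l..u}) x + \<bar>indicator U' x - f n x\<bar>"
      using AU' fb[of n x] by (auto simp: indicator_def)
  qed
  also have "\<dots> = measure lborel ((U' - A) \<inter> {l..u}) + integral\<^sup>L ?M (\<lambda>x. \<bar>indicator U' x - f n x\<bar>)"
  proof -
    have "integral\<^sup>L ?M (\<lambda>x. indicator ((U' - A) \<inter> {l..u}) x :: real) = measure lborel ((U' - A) \<inter> {l..u})"
      using Xs apply (simp add: integral_restrict_space indicator_inter_arith[symmetric] Int_commute)
      apply (subst measure_restrict_space) by (auto intro!: arg_cong[where f="measure lborel"])
    then show ?thesis using int1 int2 by simp
  qed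
  also have "\<dots> < e" using Xm m1 n by linarith
  finally show ?thesis using fc fb by blast
qed
lemma cont_int:
  fixes v :: "real \<Rightarrow> real"
  assumes "continuous_on UNIV v"
  shows "integrable (restrict_space lborel {l..u}) v"
proof -
  have "compact (v ` {l..u})"
    using assms by (intro compact_continuous_image) (auto intro: continuous_on_subset)
  then obtain B where "\<forall>y\<in>v ` {l..u}. norm y \<le> B"
    using compact_imp_bounded bounded_iff by metis
  then show ?thesis
    using borel_measurable_continuous_onI[OF assms] by (intro int_bdd[where B=B] measurable_restrict_space1) auto
qed

lemma dens_L1:
  fixes f :: "real \<Rightarrow> real"
  assumes "integrable (restrict_space lborel {l..u}) f"
  shows "\<forall>e>0. \<exists>v. continuous_on UNIV v \<and>
           integral\<^sup>L (restrict_space lborel {l..u}) (\<lambda>x. \<bar>f x - v x\<bar>) < e"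
  using assms
proof (induct rule: integrable_induct)
  case (base A c)
  let ?M = "restrict_space lborel {l..u}"
  have A: "A \<in> sets borel" "A \<subseteq> {l..u}"
    using base(1) by (auto simp: sets_restrict_space_iff)
  show ?case
  proof (intro allI impI)
    fix e :: real assume e: "e > 0"
    have e': "e / (\<bar>c\<bar> + 1) > 0" using e by simp
    obtain v where v: "continuous_on UNIV v" "\<forall>x. 0 \<le> v x \<and> v x \<le> 1"
      "integral\<^sup>L ?M (\<lambda>x. \<bar>indicator A x - v x\<bar>) < e / (\<bar>c\<bar> + 1)"
      using dens_ind[OF A e'] by blast
    have "integral\<^sup>L ?M (\<lambda>x. \<bar>indicator A x *\<^sub>R c - v x * c\<bar>) = \<bar>c\<bar> * integral\<^sup>L ?M (\<lambda>x. \<bar>indicator A x - v x\<bar>)"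
    proof -
      have eq: "\<And>x. \<bar>indicator A x *\<^sub>R c - v x * c\<bar> = \<bar>c\<bar> * \<bar>indicator A x - v x\<bar>"
        by (metis abs_mult left_diff_distrib mult.commute real_scaleR_def)
      show ?thesis unfolding eq by (rule integral_mult_right_zero)
    qed
    also have "\<dots> \<le> \<bar>c\<bar> * (e / (\<bar>c\<bar> + 1))"
      using v(3) by (intro mult_left_mono) auto
    also have "\<dots> < e" using e by (simp add: field_simps)
    finally show "\<exists>v. continuous_on UNIV v \<and> integral\<^sup>L ?M (\<lambda>x. \<bar>indicator A x *\<^sub>R c - v x\<bar>) < e"
      using v(1) by (intro exI[of _ "\<lambda>x. v x * c"]) (auto intro: continuous_intros)
  qed
next
  case (add f g)
  let ?M = "restrict_space lborel {l..u}"
  show ?case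
  proof (intro allI impI)
    fix e :: real assume e: "e > 0"
    obtain vf where vf: "continuous_on UNIV vf" "integral\<^sup>L ?M (\<lambda>x. \<bar>f x - vf x\<bar>) < e/2"
      using add(2) e by (meson half_gt_zero)
    obtain vg where vg: "continuous_on UNIV vg" "integral\<^sup>L ?M (\<lambda>x. \<bar>g x - vg x\<bar>) < e/2"
      using add(4) e by (meson half_gt_zero)
    have i1: "integrable ?M (\<lambda>x. \<bar>f x - vf x\<bar>)" using add(1) cont_int[OF vf(1)] by auto
    have i2: "integrable ?M (\<lambda>x. \<bar>g x - vg x\<bar>)" using add(3) cont_int[OF vg(1)] by auto
    have i3: "integrable ?M (\<lambda>x. \<bar>(f x + g x) - (vf x + vg x)\<bar>)"
      using add(1,3) cont_int[OF vf(1)] cont_int[OF vg(1)] by auto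
    have "integral\<^sup>L ?M (\<lambda>x. \<bar>(f x + g x) - (vf x + vg x)\<bar>) \<le> integral\<^sup>L ?M (\<lambda>x. \<bar>f x - vf x\<bar> + \<bar>g x - vg x\<bar>)"
      by (rule integral_mono[OF i3 Bochner_Integration.integrable_add[OF i1 i2]]) auto
    also have "\<dots> < e" using i1 i2 vf(2) vg(2) by simp
    finally show "\<exists>v. continuous_on UNIV v \<and> integral\<^sup>L ?M (\<lambda>x. \<bar>(f x + g x) - v x\<bar>) < e"
      using vf(1) vg(1) by (intro exI[of _ "\<lambda>x. vf x + vg x"]) (auto intro: continuous_intros)
  qed
next
  case (lim f s)
  let ?M = "restrict_space lborel {l..u}"
  show ?case
  proof (intro allI impI)
    fix e :: real assume e: "e > 0"
    have "(\<lambda>i. integral\<^sup>L ?M (\<lambda>x. \<bar>s i x - f x\<bar>)) \<longlonglongrightarrow> integral\<^sup>L ?M (\<lambda>x. 0::real)"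
    proof (rule integral_dominated_convergence[where w="\<lambda>x. 3 * \<bar>f x\<bar>"])
      show "(\<lambda>x. 0::real) \<in> borel_measurable ?M" by simp
      show "(\<lambda>x. \<bar>s i x - f x\<bar>) \<in> borel_measurable ?M" for i
        using lim(1)[of i] lim(5) by auto
      show "integrable ?M (\<lambda>x. 3 * \<bar>f x\<bar>)" using lim(5) by auto
      show "AE x in ?M. (\<lambda>i. \<bar>s i x - f x\<bar>) \<longlonglongrightarrow> 0"
      proof (intro AE_I2)
        fix x assume x: "x \<in> space ?M"
        have "(\<lambda>i. \<bar>s i x - f x\<bar>) \<longlonglongrightarrow> \<bar>f x - f x\<bar>"
          by (intro tendsto_intros lim(3)[OF x])
        then show "(\<lambda>i. \<bar>s i x - f x\<bar>) \<longlonglongrightarrow> 0" by simp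
      qed
      show "AE x in ?M. norm \<bar>s i x - f x\<bar> \<le> 3 * \<bar>f x\<bar>" for i
        using lim(4)[of _ i] by (intro AE_I2) fastforce
    qed
    then have "(\<lambda>i. integral\<^sup>L ?M (\<lambda>x. \<bar>s i x - f x\<bar>)) \<longlonglongrightarrow> 0" by simp
    then have "eventually (\<lambda>i. integral\<^sup>L ?M (\<lambda>x. \<bar>s i x - f x\<bar>) < e/2) sequentially"
      using e by (intro order_tendstoD(2)) auto
    then obtain i where i: "integral\<^sup>L ?M (\<lambda>x. \<bar>s i x - f x\<bar>) < e/2"
      by (auto simp: eventually_sequentially)
    obtain v where v: "continuous_on UNIV v" "integral\<^sup>L ?M (\<lambda>x. \<bar>s i x - v x\<bar>) < e/2"
      using lim(2)[of i] e by (meson half_gt_zero)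
    have i1: "integrable ?M (\<lambda>x. \<bar>s i x - f x\<bar>)" using lim(1)[of i] lim(5) by auto
    have i2: "integrable ?M (\<lambda>x. \<bar>s i x - v x\<bar>)" using lim(1)[of i] cont_int[OF v(1)] by auto
    have i3: "integrable ?M (\<lambda>x. \<bar>f x - v x\<bar>)" using lim(5) cont_int[OF v(1)] by auto
    have "integral\<^sup>L ?M (\<lambda>x. \<bar>f x - v x\<bar>) \<le> integral\<^sup>L ?M (\<lambda>x. \<bar>s i x - f x\<bar> + \<bar>s i x - v x\<bar>)"
      by (rule integral_mono[OF i3 Bochner_Integration.integrable_add[OF i1 i2]]) auto
    also have "\<dots> < e" using i1 i2 i v(2) by simp
    finally show "\<exists>v. continuous_on UNIV v \<and> integral\<^sup>L ?M (\<lambda>x. \<bar>f x - v x\<bar>) < e"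
      using v(1) by blast
  qed
qed


lemma tri3:
  fixes x y z p :: real assumes "p > 0"
  shows "\<bar>x+y+z\<bar> powr p \<le> 3 powr p * (\<bar>x\<bar> powr p + \<bar>y\<bar> powr p + \<bar>z\<bar> powr p)"
proof -
  define m where "m = max \<bar>x\<bar> (max \<bar>y\<bar> \<bar>z\<bar>)"
  have "\<bar>x+y+z\<bar> \<le> 3 * m" unfolding m_def by linarith
  then have "\<bar>x+y+z\<bar> powr p \<le> (3 * m) powr p" using assms by (intro powr_mono2) auto
  also have "\<dots> = 3 powr p * m powr p" by (simp add: powr_mult)
  also have "m powr p \<le> \<bar>x\<bar> powr p + \<bar>y\<bar> powr p + \<bar>z\<bar> powr p"
    unfolding m_def by (auto simp: max_def)
  then have "3 powr p * m powr p \<le> 3 powr p * (\<bar>x\<bar> powr p + \<bar>y\<bar> powr p + \<bar>z\<bar> powr p)"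
    by (intro mult_left_mono) auto
  finally show ?thesis .
qed

lemma int_ind:
  fixes a s K :: real
  assumes "0 \<le> s" "s \<le> a"
  shows "integral\<^sup>L (restrict_space lborel {0..a}) (\<lambda>t. K * indicator {0..s} t) = K * s"
proof -
  have "integral\<^sup>L (restrict_space lborel {0..a}) (\<lambda>t. K * indicator {0..s} t)
      = integral\<^sup>L lborel (\<lambda>t. K * indicator {0..s} t)"
    using assms by (auto simp: integral_restrict_space indicator_def intro!: Bochner_Integration.integral_cong)
  also have "\<dots> = K * s" using assms by simp
  finally show ?thesis .
qed

theorem lemma2p1:
  fixes a p c1 c2 \<delta> :: real and \<phi> \<phi>' :: "real \<Rightarrow> real"
  assumes "a > 0" and "p > 1"
    and "continuous_on {0..a} \<phi>"
    and "continuous_on {0<..a} \<phi>'"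
    and "\<forall>t\<in>{0<..a}. (\<phi> has_real_derivative \<phi>' t) (at t within {0<..a})"
    and "\<phi> 0 = 0" and "\<forall>t\<in>{0<..a}. \<phi> t > 0"
    and "c1 > 0" and "c2 > 0" and "\<delta> > 0"
    and "\<forall>t\<in>{0<..a}. c1 * t powr (p - 1 + \<delta>) \<le> \<phi> t \<and> \<phi> t \<le> c2 * t powr (p - 1 + \<delta>)"
  shows "\<forall>u g. E_space a p \<phi> u g \<longrightarrow>
           (\<forall>e>0. \<exists>v v'. C1_0 a v v' \<and>
              set_integrable lborel {0..a} (\<lambda>t. \<bar>g t - v' t\<bar> powr p * \<phi> t) \<and>
              (LINT t:{0..a}|lborel. \<bar>g t - v' t\<bar> powr p * \<phi> t) powr (1 / p) < e)"
proof (rule allI, rule allI, rule impI)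
  fix u g assume E: "E_space a p \<phi> u g"
  show "\<forall>e>0. \<exists>v v'. C1_0 a v v' \<and>
              set_integrable lborel {0..a} (\<lambda>t. \<bar>g t - v' t\<bar> powr p * \<phi> t) \<and>
              (LINT t:{0..a}|lborel. \<bar>g t - v' t\<bar> powr p * \<phi> t) powr (1 / p) < e"
  proof (intro allI impI)
    fix e :: real assume e: "e > 0"
    let ?M = "restrict_space lborel {0..a}"
    define q where "q = p - 1 + \<delta>"
    have q: "q > 0" using assms(2,10) by (simp add: q_def)
    have a: "a > 0" and p: "p > 1" using assms by auto
    from E have gmeas0: "set_borel_measurable lborel {0<..<a} g"
      and gint0: "set_integrable lborel {0..a} (\<lambda>t. \<bar>g t\<bar> powr p * \<phi> t)"
      unfolding E_space_def W1p_def by auto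
    have gm[measurable]: "g \<in> borel_measurable ?M"
    proof -
      have m[measurable]: "(\<lambda>x. indicator {0<..<a} x *\<^sub>R g x) \<in> borel_measurable lborel"
        using gmeas0 unfolding set_borel_measurable_def .
      have "(\<lambda>x. indicator {0<..<a} x *\<^sub>R g x + indicator {0} x * g 0 + indicator {a} x * g a) \<in> borel_measurable lborel"
        by measurable
      then have "(\<lambda>x. indicator {0<..<a} x *\<^sub>R g x + indicator {0} x * g 0 + indicator {a} x * g a) \<in> borel_measurable ?M"
        by (intro measurable_restrict_space1) auto
      moreover have "\<And>x. x \<in> space ?M \<Longrightarrow> indicator {0<..<a} x *\<^sub>R g x + indicator {0} x * g 0 + indicator {a} x * g a = g x"
        using a by (auto simp: indicator_def)
      ultimately show ?thesis using measurable_cong by (smt (verit, ccfv_SIG))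
    qed
    have phim[measurable]: "\<phi> \<in> borel_measurable ?M"
    proof -
      have "\<phi> \<in> borel_measurable (restrict_space borel {0..a})"
        by (rule borel_measurable_continuous_on_restrict[OF assms(3)])
      moreover have "sets (restrict_space borel {0..a}) = sets ?M" by (simp add: sets_restrict_space)
      ultimately show ?thesis using measurable_cong_sets by blast
    qed
    have gint: "integrable ?M (\<lambda>t. \<bar>g t\<bar> powr p * \<phi> t)"
      using gint0 by (simp add: set_integrable_def integrable_restrict_space)
    have phi_le: "\<phi> t \<le> c2 * s powr q" if "0 \<le> t" "t \<le> s" "s \<le> a" for s t
    proof (cases "t = 0")
      case True then show ?thesis using assms(6,9) by simp
    next
      case False
      then have "\<phi> t \<le> c2 * t powr q" using assms(11) that by (auto simp: q_def)
      also have "\<dots> \<le> c2 * s powr q" using that q assms(9) by (intro mult_left_mono powr_mono2) auto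
      finally show ?thesis .
    qed
    have phi0: "0 \<le> \<phi> t" if "t \<in> {0..a}" for t
      using assms(6,7) that by (cases "t = 0") (auto simp: less_le)
    define \<Phi> where "\<Phi> = c2 * a powr q"
    have Phi0: "\<Phi> \<ge> 0" using assms(9) by (simp add: \<Phi>_def)
    have phiB: "\<phi> t \<le> \<Phi>" if "t \<in> {0..a}" for t using phi_le[of t a] that by (simp add: \<Phi>_def)
    define \<epsilon> where "\<epsilon> = e powr p / (3 powr p * 4)"
    have eps: "\<epsilon> > 0" using e by (simp add: \<epsilon>_def)
    define gB where "gB n t = max (- real n) (min (real n) (g t))" for n t
    have gBm[measurable]: "gB n \<in> borel_measurable ?M" for n unfolding gB_def by measurable
    have "(\<lambda>n. integral\<^sup>L ?M (\<lambda>t. \<bar>g t - gB n t\<bar> powr p * \<phi> t)) \<longlonglongrightarrow> integral\<^sup>L ?M (\<lambda>t. 0::real)"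
    proof (rule integral_dominated_convergence[where w="\<lambda>t. \<bar>g t\<bar> powr p * \<phi> t"])
      show "(\<lambda>t. 0::real) \<in> borel_measurable ?M" by simp
      show "(\<lambda>t. \<bar>g t - gB n t\<bar> powr p * \<phi> t) \<in> borel_measurable ?M" for n by measurable
      show "integrable ?M (\<lambda>t. \<bar>g t\<bar> powr p * \<phi> t)" by (rule gint)
      show "AE t in ?M. (\<lambda>n. \<bar>g t - gB n t\<bar> powr p * \<phi> t) \<longlonglongrightarrow> 0"
      proof (intro AE_I2)
        fix t
        obtain N :: nat where "\<bar>g t\<bar> \<le> real N" using real_arch_simple by blast
        then have "eventually (\<lambda>n. \<bar>g t - gB n t\<bar> powr p * \<phi> t = 0) sequentially"
          unfolding eventually_sequentially gB_def
          by (intro exI[of _ N] allI impI) (auto simp: max_def min_def)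
        then show "(\<lambda>n. \<bar>g t - gB n t\<bar> powr p * \<phi> t) \<longlonglongrightarrow> 0" by (simp add: tendsto_eventually)
      qed
      show "AE t in ?M. norm (\<bar>g t - gB n t\<bar> powr p * \<phi> t) \<le> \<bar>g t\<bar> powr p * \<phi> t" for n
      proof (intro AE_I2)
        fix t assume t: "t \<in> space ?M"
        have "\<bar>g t - gB n t\<bar> \<le> \<bar>g t\<bar>" unfolding gB_def by (auto simp: max_def min_def)
        then have "\<bar>g t - gB n t\<bar> powr p \<le> \<bar>g t\<bar> powr p" using p by (intro powr_mono2) auto
        then show "norm (\<bar>g t - gB n t\<bar> powr p * \<phi> t) \<le> \<bar>g t\<bar> powr p * \<phi> t"
          using phi0[of t] t by (auto intro: mult_right_mono)
      qed
    qed
    then have "(\<lambda>n. integral\<^sup>L ?M (\<lambda>t. \<bar>g t - gB n t\<bar> powr p * \<phi> t)) \<longlonglongrightarrow> 0" by simp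
    then have "eventually (\<lambda>n. integral\<^sup>L ?M (\<lambda>t. \<bar>g t - gB n t\<bar> powr p * \<phi> t) < \<epsilon>) sequentially"
      using eps by (intro order_tendstoD(2)) auto
    then obtain N where N: "integral\<^sup>L ?M (\<lambda>t. \<bar>g t - gB N t\<bar> powr p * \<phi> t) < \<epsilon>"
      by (auto simp: eventually_sequentially)
    define B where "B = real N"
    have B0: "B \<ge> 0" by (simp add: B_def)
    have gBb: "\<bar>gB N t\<bar> \<le> B" for t unfolding gB_def B_def by auto
    have int1: "integrable ?M (\<lambda>t. \<bar>g t - gB N t\<bar> powr p * \<phi> t)"
    proof (rule Bochner_Integration.integrable_bound[OF gint])
      show "(\<lambda>t. \<bar>g t - gB N t\<bar> powr p * \<phi> t) \<in> borel_measurable ?M" by measurable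
      show "AE t in ?M. norm (\<bar>g t - gB N t\<bar> powr p * \<phi> t) \<le> norm (\<bar>g t\<bar> powr p * \<phi> t)"
      proof (intro AE_I2)
        fix t assume t: "t \<in> space ?M"
        have "\<bar>g t - gB N t\<bar> \<le> \<bar>g t\<bar>" unfolding gB_def by (auto simp: max_def min_def)
        then have "\<bar>g t - gB N t\<bar> powr p \<le> \<bar>g t\<bar> powr p" using p by (intro powr_mono2) auto
        then show "norm (\<bar>g t - gB N t\<bar> powr p * \<phi> t) \<le> norm (\<bar>g t\<bar> powr p * \<phi> t)"
          using phi0[of t] t by (auto intro: mult_right_mono)
      qed
    qed
    define K where "K = \<Phi> * (2 * B + 1) powr (p - 1) + 1"
    have K: "K > 0"
    proof -
      have "\<Phi> * (2 * B + 1) powr (p - 1) \<ge> 0" using Phi0 by (intro mult_nonneg_nonneg) auto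
      then show ?thesis by (simp add: K_def)
    qed
    have gBint: "integrable ?M (gB N)" using gBb by (intro int_bdd[where B=B]) auto
    obtain v0 where v0: "continuous_on UNIV v0" "integral\<^sup>L ?M (\<lambda>t. \<bar>gB N t - v0 t\<bar>) < \<epsilon> / K"
      using dens_L1[OF gBint] eps K by (meson divide_pos_pos)
    define v where "v t = max (- B) (min B (v0 t))" for t
    have vc: "continuous_on UNIV v" unfolding v_def using v0(1) by (intro continuous_intros)
    have vb: "\<bar>v t\<bar> \<le> B" for t unfolding v_def using B0 by auto
    have vm[measurable]: "v \<in> borel_measurable ?M"
      using borel_measurable_continuous_onI[OF vc] by (intro measurable_restrict_space1) auto
    have v0m[measurable]: "v0 \<in> borel_measurable ?M"
      using borel_measurable_continuous_onI[OF v0(1)] by (intro measurable_restrict_space1) auto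
    have vclose: "\<bar>gB N t - v t\<bar> \<le> \<bar>gB N t - v0 t\<bar>" for t
      using gBb[of t] unfolding v_def by (auto simp: max_def min_def)
    have int2: "integrable ?M (\<lambda>t. \<bar>gB N t - v t\<bar> powr p * \<phi> t)"
    proof (rule int_bdd[where B="(2*B) powr p * \<Phi>"])
      show "(\<lambda>t. \<bar>gB N t - v t\<bar> powr p * \<phi> t) \<in> borel_measurable ?M" by measurable
      fix t assume t: "t \<in> {0..a}"
      have "\<bar>gB N t - v t\<bar> \<le> 2 * B" using gBb[of t] vb[of t] by linarith
      then have "\<bar>gB N t - v t\<bar> powr p \<le> (2*B) powr p" using p by (intro powr_mono2) auto
      then show "\<bar>\<bar>gB N t - v t\<bar> powr p * \<phi> t\<bar> \<le> (2*B) powr p * \<Phi>"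
        using phi0[OF t] phiB[OF t] by (simp add: abs_mult mult_mono)
    qed
    have int2': "integrable ?M (\<lambda>t. \<bar>gB N t - v0 t\<bar>)" using gBint cont_int[OF v0(1)] by auto
    have step2: "integral\<^sup>L ?M (\<lambda>t. \<bar>gB N t - v t\<bar> powr p * \<phi> t) < \<epsilon>"
    proof -
      have "integral\<^sup>L ?M (\<lambda>t. \<bar>gB N t - v t\<bar> powr p * \<phi> t) \<le> integral\<^sup>L ?M (\<lambda>t. K * \<bar>gB N t - v0 t\<bar>)"
      proof (rule integral_mono[OF int2])
        show "integrable ?M (\<lambda>t. K * \<bar>gB N t - v0 t\<bar>)" using int2' by simp
        fix t assume t: "t \<in> space ?M"
        then have t: "t \<in> {0..a}" by simp
        define d where "d = \<bar>gB N t - v t\<bar>"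
        have d0: "d \<ge> 0" by (simp add: d_def)
        have dB: "d \<le> 2 * B + 1" using gBb[of t] vb[of t] by (simp add: d_def)
        have "d powr p = d powr (p - 1) * d powr 1" using powr_add[of d "p - 1" 1] by simp
        also have "\<dots> = d powr (p - 1) * d" using d0 by (simp add: powr_one)
        also have "\<dots> \<le> (2 * B + 1) powr (p - 1) * d"
          using d0 dB p by (intro mult_right_mono powr_mono2) auto
        finally have dp: "d powr p \<le> (2 * B + 1) powr (p - 1) * d" .
        have "d powr p * \<phi> t \<le> ((2 * B + 1) powr (p - 1) * d) * \<Phi>"
          using dp phi0[OF t] phiB[OF t] d0 by (intro mult_mono) auto
        also have "\<dots> = (\<Phi> * (2 * B + 1) powr (p - 1)) * d" by simp
        also have "\<dots> \<le> K * d" using d0 by (intro mult_right_mono) (auto simp: K_def)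
        also have "\<dots> \<le> K * \<bar>gB N t - v0 t\<bar>" using K vclose[of t] by (simp add: d_def)
        finally show "\<bar>gB N t - v t\<bar> powr p * \<phi> t \<le> K * \<bar>gB N t - v0 t\<bar>" by (simp add: d_def)
      qed
      also have "\<dots> = K * integral\<^sup>L ?M (\<lambda>t. \<bar>gB N t - v0 t\<bar>)" by simp
      also have "\<dots> < K * (\<epsilon> / K)" using v0(2) K by (intro mult_strict_left_mono) auto
      also have "\<dots> = \<epsilon>" using K by simp
      finally show ?thesis .
    qed

    define I where "I = integral\<^sup>L ?M v"
    define C where "C = \<bar>I\<bar> powr p * 4 powr p * c2 + 1"
    have C1: "C - 1 \<ge> 0" using assms(9) by (simp add: C_def)
    then have C: "C > 0" by simp
    define \<eta> where "\<eta> = min a ((\<epsilon> / C) powr (1 / \<delta>))"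
    have eta0: "\<eta> > 0" using a eps C by (simp add: \<eta>_def)
    have etaa: "\<eta> \<le> a" by (simp add: \<eta>_def)
    have etad: "\<eta> powr \<delta> \<le> \<epsilon> / C"
    proof -
      have "\<eta> powr \<delta> \<le> ((\<epsilon> / C) powr (1 / \<delta>)) powr \<delta>"
        using assms(10) eta0 by (intro powr_mono2) (auto simp: \<eta>_def)
      also have "\<dots> = \<epsilon> / C" using assms(10) eps C by (simp add: powr_powr)
      finally show ?thesis .
    qed
    define h where "h t = max 0 (1 - t / \<eta>)" for t
    have hc: "continuous_on UNIV h" unfolding h_def using eta0 by (intro continuous_intros) auto
    have hm[measurable]: "h \<in> borel_measurable ?M"
      using borel_measurable_continuous_onI[OF hc] by (intro measurable_restrict_space1) auto
    have h01: "0 \<le> h t \<and> h t \<le> 1" if "t \<ge> 0" for t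
      using that eta0 by (auto simp: h_def)
    have hz: "h t = 0" if "t \<ge> \<eta>" for t
      using that eta0 by (auto simp: h_def field_simps)
    have indm: "(\<lambda>t. K' * indicator {0..s} t) \<in> borel_measurable ?M" for K' s :: real
      by (intro measurable_restrict_space1) measurable
    define J where "J = integral\<^sup>L ?M h"
    have J: "J \<ge> \<eta> / 4"
    proof -
      have "integral\<^sup>L ?M (\<lambda>t. (1/2::real) * indicator {0..\<eta>/2} t) \<le> J" unfolding J_def
      proof (rule integral_mono[OF _ cont_int[OF hc]])
        show "integrable ?M (\<lambda>t. (1/2::real) * indicator {0..\<eta>/2} t)"
          apply (rule int_bdd[where B=1])
          using indm apply blast
          by (auto simp: indicator_def)
        fix t assume "t \<in> space ?M"
        then have t: "t \<ge> 0" by simp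
        show "1 / 2 * indicator {0..\<eta> / 2} t \<le> h t"
        proof (cases "t \<le> \<eta>/2")
          case True
          then have "t / \<eta> \<le> 1/2" using eta0 by (simp add: field_simps)
          then have "h t \<ge> 1/2" unfolding h_def by (auto simp: le_max_iff_disj)
          then show ?thesis using t True by (simp add: indicator_def)
        next
          case False then show ?thesis using h01[OF t] by (simp add: indicator_def)
        qed
      qed
      moreover have "integral\<^sup>L ?M (\<lambda>t. (1/2::real) * indicator {0..\<eta>/2} t) = (1/2) * (\<eta>/2)"
        using eta0 etaa by (intro int_ind) auto
      ultimately show ?thesis by simp
    qed
    have J0: "J > 0" using J eta0 by linarith
    define c where "c = I / J"
    define w where "w t = v t - c * h t" for t
    have wc: "continuous_on UNIV w" unfolding w_def using vc hc by (intro continuous_intros)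
    have wm[measurable]: "w \<in> borel_measurable ?M"
      using borel_measurable_continuous_onI[OF wc] by (intro measurable_restrict_space1) auto
    have wint0: "integral\<^sup>L ?M w = 0"
    proof -
      have "integral\<^sup>L ?M w = integral\<^sup>L ?M v - integral\<^sup>L ?M (\<lambda>t. c * h t)"
        unfolding w_def using cont_int[OF vc] cont_int[OF hc] by (intro Bochner_Integration.integral_diff) auto
      also have "\<dots> = I - c * J" by (simp add: I_def J_def)
      also have "\<dots> = 0" using J0 by (simp add: c_def)
      finally show ?thesis .
    qed
    have cb: "\<bar>c\<bar> \<le> \<bar>I\<bar> * 4 / \<eta>"
    proof -
      have "\<bar>c\<bar> = \<bar>I\<bar> / J" using J0 by (simp add: c_def abs_div)
      also have "\<dots> \<le> \<bar>I\<bar> / (\<eta> / 4)" using J eta0 by (intro divide_left_mono) auto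
      finally show ?thesis by simp
    qed
    have int3: "integrable ?M (\<lambda>t. \<bar>c * h t\<bar> powr p * \<phi> t)"
    proof (rule int_bdd[where B="\<bar>c\<bar> powr p * \<Phi>"])
      show "(\<lambda>t. \<bar>c * h t\<bar> powr p * \<phi> t) \<in> borel_measurable ?M" by measurable
      fix t assume t: "t \<in> {0..a}"
      have "\<bar>c * h t\<bar> \<le> \<bar>c\<bar>" using h01[of t] t by (simp add: abs_mult mult_left_le)
      then have "\<bar>c * h t\<bar> powr p \<le> \<bar>c\<bar> powr p" using p by (intro powr_mono2) auto
      then show "\<bar>\<bar>c * h t\<bar> powr p * \<phi> t\<bar> \<le> \<bar>c\<bar> powr p * \<Phi>"
        using phi0[OF t] phiB[OF t] by (simp add: abs_mult mult_mono)
    qed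
    have step3: "integral\<^sup>L ?M (\<lambda>t. \<bar>c * h t\<bar> powr p * \<phi> t) < \<epsilon>"
    proof -
      have "integral\<^sup>L ?M (\<lambda>t. \<bar>c * h t\<bar> powr p * \<phi> t)
          \<le> integral\<^sup>L ?M (\<lambda>t. (\<bar>c\<bar> powr p * (c2 * \<eta> powr q)) * indicator {0..\<eta>} t)"
      proof (rule integral_mono[OF int3])
        show "integrable ?M (\<lambda>t. (\<bar>c\<bar> powr p * (c2 * \<eta> powr q)) * indicator {0..\<eta>} t)"
          apply (rule int_bdd[where B="\<bar>c\<bar> powr p * (c2 * \<eta> powr q)"])
          using indm apply blast
          using assms(9) by (auto simp: indicator_def)
        fix t assume "t \<in> space ?M"
        then have t: "t \<in> {0..a}" by simp
        show "\<bar>c * h t\<bar> powr p * \<phi> t \<le> (\<bar>c\<bar> powr p * (c2 * \<eta> powr q)) * indicator {0..\<eta>} t"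
        proof (cases "t \<le> \<eta>")
          case True
          have "\<bar>c * h t\<bar> \<le> \<bar>c\<bar>" using h01[of t] t by (simp add: abs_mult mult_left_le)
          then have "\<bar>c * h t\<bar> powr p \<le> \<bar>c\<bar> powr p" using p by (intro powr_mono2) auto
          moreover have "\<phi> t \<le> c2 * \<eta> powr q" using phi_le[of t \<eta>] t True etaa by auto
          ultimately show ?thesis using True t phi0[OF t] by (simp add: mult_mono)
        next
          case False
          then show ?thesis using hz[of t] by simp
        qed
      qed
      also have "\<dots> = (\<bar>c\<bar> powr p * (c2 * \<eta> powr q)) * \<eta>"
        using eta0 etaa by (intro int_ind) auto
      also have "\<dots> \<le> ((\<bar>I\<bar> * 4 / \<eta>) powr p * (c2 * \<eta> powr q)) * \<eta>"
        using cb p eta0 assms(9) by (intro mult_right_mono powr_mono2) auto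
      also have "\<dots> = \<bar>I\<bar> powr p * 4 powr p * c2 * (\<eta> powr q * \<eta> powr 1 / \<eta> powr p)"
        using eta0 by (simp add: powr_divide powr_mult)
      also have "\<eta> powr q * \<eta> powr 1 / \<eta> powr p = \<eta> powr \<delta>"
      proof -
        have "\<eta> powr q * \<eta> powr 1 / \<eta> powr p = \<eta> powr (q + 1 - p)"
          by (simp only: powr_add[symmetric] powr_diff[symmetric])
        also have "q + 1 - p = \<delta>" by (simp add: q_def)
        finally show ?thesis .
      qed
      also have "\<bar>I\<bar> powr p * 4 powr p * c2 * \<eta> powr \<delta> \<le> (C - 1) * (\<epsilon> / C)"
        using etad C1 by (intro mult_mono) (auto simp: C_def)
      also have "\<dots> < \<epsilon>" using C eps by (simp add: field_simps)
      finally show ?thesis .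
    qed
    have gw: "g t - w t = (g t - gB N t) + (gB N t - v t) + c * h t" for t by (simp add: w_def)
    define S where "S t = 3 powr p * (\<bar>g t - gB N t\<bar> powr p * \<phi> t + \<bar>gB N t - v t\<bar> powr p * \<phi> t + \<bar>c * h t\<bar> powr p * \<phi> t)" for t
    have intS: "integrable ?M S" unfolding S_def using int1 int2 int3 by auto
    have Sb: "\<bar>g t - w t\<bar> powr p * \<phi> t \<le> S t" if t: "t \<in> {0..a}" for t
    proof -
      have "\<bar>g t - w t\<bar> powr p \<le> 3 powr p * (\<bar>g t - gB N t\<bar> powr p + \<bar>gB N t - v t\<bar> powr p + \<bar>c * h t\<bar> powr p)"
        unfolding gw using p by (intro tri3) auto
      then have "\<bar>g t - w t\<bar> powr p * \<phi> t \<le> (3 powr p * (\<bar>g t - gB N t\<bar> powr p + \<bar>gB N t - v t\<bar> powr p + \<bar>c * h t\<bar> powr p)) * \<phi> t"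
        using phi0[OF t] by (rule mult_right_mono)
      then show ?thesis by (simp add: S_def algebra_simps)
    qed
    have intF: "integrable ?M (\<lambda>t. \<bar>g t - w t\<bar> powr p * \<phi> t)"
    proof (rule Bochner_Integration.integrable_bound[OF intS])
      show "(\<lambda>t. \<bar>g t - w t\<bar> powr p * \<phi> t) \<in> borel_measurable ?M" by measurable
      show "AE t in ?M. norm (\<bar>g t - w t\<bar> powr p * \<phi> t) \<le> norm (S t)"
      proof (intro AE_I2)
        fix t assume "t \<in> space ?M"
        then have t: "t \<in> {0..a}" by simp
        have "0 \<le> \<bar>g t - w t\<bar> powr p * \<phi> t" using phi0[OF t] by simp
        then show "norm (\<bar>g t - w t\<bar> powr p * \<phi> t) \<le> norm (S t)" using Sb[OF t] by simp
      qed
    qed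
    have X0: "integral\<^sup>L ?M (\<lambda>t. \<bar>g t - w t\<bar> powr p * \<phi> t) \<ge> 0"
      using phi0 by (intro integral_nonneg_AE AE_I2) auto
    have Xb: "integral\<^sup>L ?M (\<lambda>t. \<bar>g t - w t\<bar> powr p * \<phi> t) < e powr p"
    proof -
      have "integral\<^sup>L ?M (\<lambda>t. \<bar>g t - w t\<bar> powr p * \<phi> t) \<le> integral\<^sup>L ?M S"
        using Sb by (intro integral_mono[OF intF intS]) auto
      also have "\<dots> = 3 powr p * (integral\<^sup>L ?M (\<lambda>t. \<bar>g t - gB N t\<bar> powr p * \<phi> t)
          + integral\<^sup>L ?M (\<lambda>t. \<bar>gB N t - v t\<bar> powr p * \<phi> t) + integral\<^sup>L ?M (\<lambda>t. \<bar>c * h t\<bar> powr p * \<phi> t))"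
        unfolding S_def using int1 int2 int3 by simp
      also have "\<dots> < 3 powr p * (\<epsilon> + \<epsilon> + \<epsilon>)"
        using N step2 step3 by (intro mult_strict_left_mono) auto
      also have "\<dots> = (3/4) * e powr p" by (simp add: \<epsilon>_def field_simps)
      also have "\<dots> < e powr p" using e by simp
      finally show ?thesis .
    qed
    define V where "V t = integral {0..t} w" for t
    have wca: "continuous_on {0..a} w" using wc by (rule continuous_on_subset) auto
    have C10: "C1_0 a V w"
      unfolding C1_0_def
    proof (intro conjI ballI)
      show "continuous_on {0..a} w" by (rule wca)
      show "(V has_real_derivative w t) (at t within {0..a})" if "t \<in> {0..a}" for t
        unfolding V_def by (rule integral_has_real_derivative[OF wca that])
      show "V 0 = 0" by (simp add: V_def)
      have si: "set_integrable lborel {0..a} w" by (rule borel_integrable_atLeastAtMost'[OF wca])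
      have "V a = (LINT x:{0..a}|lborel. w x)" unfolding V_def using set_borel_integral_eq_integral(2)[OF si] by simp
      also have "\<dots> = integral\<^sup>L ?M w" by (simp add: set_lebesgue_integral_def integral_restrict_space)
      finally show "V a = 0" using wint0 by simp
    qed
    have SI: "set_integrable lborel {0..a} (\<lambda>t. \<bar>g t - w t\<bar> powr p * \<phi> t)"
      using intF by (simp add: set_integrable_def integrable_restrict_space)
    have LI: "(LINT t:{0..a}|lborel. \<bar>g t - w t\<bar> powr p * \<phi> t) = integral\<^sup>L ?M (\<lambda>t. \<bar>g t - w t\<bar> powr p * \<phi> t)"
      by (simp add: set_lebesgue_integral_def integral_restrict_space)
    have "(LINT t:{0..a}|lborel. \<bar>g t - w t\<bar> powr p * \<phi> t) powr (1 / p) < (e powr p) powr (1 / p)"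
      unfolding LI using X0 Xb p by (intro powr_less_mono2) auto
    also have "\<dots> = e" using e p by (simp add: powr_powr)
    finally have fin: "(LINT t:{0..a}|lborel. \<bar>g t - w t\<bar> powr p * \<phi> t) powr (1 / p) < e" .
    show "\<exists>v v'. C1_0 a v v' \<and>
              set_integrable lborel {0..a} (\<lambda>t. \<bar>g t - v' t\<bar> powr p * \<phi> t) \<and>
              (LINT t:{0..a}|lborel. \<bar>g t - v' t\<bar> powr p * \<phi> t) powr (1 / p) < e"
      using C10 SI fin by blast
  qed
qed


end
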